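(* For $h\in(0,1]$, $s\in\mathbf{R}$ and $w\in\mathbf{C}$, let $G_n(s,w)=|D|^{n-1}\big(e^{-\frac{1}{2h}(\cdot-w)^2}\big)(s)$. There is a constant $B_n$ depending only on $n$ such that \[|G_n(s,w)|\le B_nh^{-\frac{n-1}{2}}\big(1+h^{-1/2}|s-w|\big)^n\Big(1+e^{\frac{1}{2h}((\mathrm{Im}\,w)^2-(s-\mathrm{Re}\,w)^2)}\Big)\] for all $h\in(0,1]$, $s\in\mathbf{R}$, $w\in\mathbf{C}$.
   Context: $|D|^{n-1}$ denotes the Fourier multiplier on $\mathbf{R}$ with symbol $|\sigma|^{n-1}$, acting in the variable $s$ (for $n$ odd it equals $D_s^{n-1}$, $D_s=-i\partial_s$). *)

theory Defs
  imports "HOL-Analysis.Analysis"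
begin

definition fourier_R :: "(real \<Rightarrow> complex) \<Rightarrow> real \<Rightarrow> complex" where
  "fourier_R f \<sigma> = (LINT x|lborel. exp (- \<i> * complex_of_real (\<sigma> * x)) * f x)"

definition absD_pow :: "nat \<Rightarrow> (real \<Rightarrow> complex) \<Rightarrow> real \<Rightarrow> complex" where
  "absD_pow k f s = complex_of_real (1 / (2 * pi)) *
     (LINT \<sigma>|lborel. exp (\<i> * complex_of_real (s * \<sigma>)) * complex_of_real (\<bar>\<sigma>\<bar> ^ k) * fourier_R f \<sigma>)"

definition G :: "nat \<Rightarrow> real \<Rightarrow> real \<Rightarrow> complex \<Rightarrow> complex" where
  "G n h s w = absD_pow (n - 1)
      (\<lambda>t. exp (- ((complex_of_real t - w) ^ 2) / complex_of_real (2 * h))) s"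

end

theory Submission
  imports Defs "HOL-Probability.Probability" "HOL-Real_Asymp.Real_Asymp"
begin


lemma pow_le_fact_exp:
  assumes x: "(x::real) \<ge> 0" shows "x ^ j \<le> fact j * exp x"
proof -
  obtain t where t: "exp x = (\<Sum>m<Suc j. (x ^ m) / fact m) + (exp t / fact (Suc j)) * x ^ Suc j"
    using Maclaurin_exp_le[of x "Suc j"] by blast
  have "x ^ j / fact j \<le> (\<Sum>m<Suc j. (x ^ m) / fact m)"
    by (rule member_le_sum[where f="\<lambda>m. x^m / fact m"]) (use x in auto)
  moreover have "0 \<le> (exp t / fact (Suc j)) * x ^ Suc j" using x by simp
  ultimately have "x ^ j / fact j \<le> exp x" using t by linarith
  then show ?thesis by (simp add: divide_simps mult.commute)
qed

lemma dom_bound: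
  fixes x c :: real and j :: nat
  assumes c: "c \<ge> 0"
  shows "\<bar>x\<bar> ^ j * exp (c * \<bar>x\<bar> - x\<^sup>2 / 2) \<le> fact j * exp ((c + 1)\<^sup>2) * exp (- x\<^sup>2 / 4)"
proof -
  have "\<bar>x\<bar> ^ j * exp (c * \<bar>x\<bar> - x\<^sup>2 / 2) \<le> fact j * exp \<bar>x\<bar> * exp (c * \<bar>x\<bar> - x\<^sup>2 / 2)"
    by (intro mult_right_mono pow_le_fact_exp) auto
  also have "\<dots> = fact j * exp ((c + 1) * \<bar>x\<bar> - x\<^sup>2 / 2)"
    by (simp add: exp_add[symmetric] algebra_simps)
  also have "\<dots> \<le> fact j * exp ((c + 1)\<^sup>2 + - x\<^sup>2 / 4)"
  proof -
    have "0 \<le> (\<bar>x\<bar> / 2 - (c + 1))\<^sup>2" by simp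
    hence "(c + 1) * \<bar>x\<bar> - x\<^sup>2 / 2 \<le> (c + 1)\<^sup>2 + - x\<^sup>2 / 4"
      by (simp add: power2_eq_square algebra_simps)
    thus ?thesis by (intro mult_left_mono) auto
  qed
  also have "\<dots> = fact j * exp ((c + 1)\<^sup>2) * exp (- x\<^sup>2 / 4)"
    by (simp only: exp_add mult.assoc)
  finally show ?thesis .
qed

lemma int_gauss4: "integrable lborel (\<lambda>x::real. exp (- x\<^sup>2 / 4))"
proof -
  have "integrable lborel (\<lambda>x. sqrt (4 * pi) * normal_density 0 (sqrt 2) x)"
    by (intro integrable_mult_right integrable_normal_density) simp
  moreover have "sqrt (4 * pi) * normal_density 0 (sqrt 2) x = exp (- x\<^sup>2 / 4)" for x
  proof -
    have s2: "0 < sqrt (2::real)" by simp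
    show ?thesis using s2 by (simp add: normal_density_def)
  qed
  ultimately show ?thesis by simp
qed

lemma integrable_dom:
  fixes f :: "real \<Rightarrow> 'a::{banach, second_countable_topology}"
  assumes m: "f \<in> borel_measurable borel" and c: "c \<ge> 0"
    and b: "\<And>x. norm (f x) \<le> \<bar>x\<bar> ^ j * exp (c * \<bar>x\<bar> - x\<^sup>2 / 2)"
  shows "integrable lborel f"
proof (rule Bochner_Integration.integrable_bound)
  show "integrable lborel (\<lambda>x. fact j * exp ((c + 1)\<^sup>2) * exp (- x\<^sup>2 / 4))"
    by (intro integrable_mult_right int_gauss4)
  show "f \<in> borel_measurable lborel" using m by simp
  show "AE x in lborel. norm (f x) \<le> norm (fact j * exp ((c + 1)\<^sup>2) * exp (- x\<^sup>2 / 4))"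
  proof (intro AE_I2)
    fix x
    have "norm (f x) \<le> fact j * exp ((c + 1)\<^sup>2) * exp (- x\<^sup>2 / 4)"
      using order_trans[OF b dom_bound[OF c]] .
    thus "norm (f x) \<le> norm (fact j * exp ((c + 1)\<^sup>2) * exp (- x\<^sup>2 / 4))" by simp
  qed
qed

lemma tendsto_dom:
  fixes f :: "real \<Rightarrow> 'a::real_normed_vector"
  assumes c: "c \<ge> 0"
    and b: "\<And>x. norm (f x) \<le> \<bar>x\<bar> ^ j * exp (c * \<bar>x\<bar> - x\<^sup>2 / 2)"
  shows "(f \<longlongrightarrow> 0) at_top"
proof (rule Lim_null_comparison)
  show "\<forall>\<^sub>F x in at_top. norm (f x) \<le> fact j * exp ((c + 1)\<^sup>2) * exp (- x\<^sup>2 / 4)"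
    using order_trans[OF b dom_bound[OF c]] by simp
  show "((\<lambda>x. fact j * exp ((c + 1)\<^sup>2) * exp (- x\<^sup>2 / 4)) \<longlongrightarrow> 0) at_top"
    by real_asymp
qed


lemma einterval_0_inf: "einterval (ereal 0) \<infinity> = {0<..}"
  by (auto simp: einterval_def)

lemma ftc_half:
  fixes F f :: "real \<Rightarrow> complex"
  assumes F: "\<And>x. (F has_vector_derivative f x) (at x)"
    and f: "\<And>x. isCont f x"
    and int: "integrable lborel (\<lambda>x. indicator {0<..} x *\<^sub>R f x)"
    and lim: "(F \<longlongrightarrow> 0) at_top"
  shows "(\<integral>x. indicator {0<..} x *\<^sub>R f x \<partial>lborel) = - F 0"
proof -
  have c0: "isCont F 0" using F[of 0] by (rule has_vector_derivative_continuous)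
  have "(LBINT x=ereal 0..\<infinity>. f x) = 0 - F 0"
  proof (rule interval_integral_FTC_integrable)
    show "set_integrable lborel (einterval (ereal 0) \<infinity>) f"
      using int by (simp add: set_integrable_def einterval_0_inf)
    show "((F \<circ> real_of_ereal) \<longlongrightarrow> F 0) (at_right (ereal 0))"
      unfolding ereal_tendsto_simps1
      using c0 by (simp add: isCont_def filterlim_at_split)
    show "((F \<circ> real_of_ereal) \<longlongrightarrow> 0) (at_left \<infinity>)"
      unfolding ereal_tendsto_simps1 using lim .
  qed (use F f in auto)
  thus ?thesis
    by (simp add: interval_lebesgue_integral_def set_lebesgue_integral_def einterval_0_inf)
qed


definition E :: "complex \<Rightarrow> real \<Rightarrow> complex" where
  "E z x = exp (\<i> * z * complex_of_real x - (complex_of_real x)\<^sup>2 / 2)"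

lemma norm_E: "norm (E z x) = exp (- Im z * x - x\<^sup>2 / 2)"
  by (simp add: E_def power2_eq_square)

lemma norm_E_le: "norm (E z x) \<le> exp (\<bar>Im z\<bar> * \<bar>x\<bar> - x\<^sup>2 / 2)"
proof -
  have "- Im z * x \<le> \<bar>Im z\<bar> * \<bar>x\<bar>"
    by (metis abs_ge_minus_self abs_minus abs_mult mult_minus_left)
  thus ?thesis by (simp add: norm_E)
qed

lemma cont_E[continuous_intros]: "continuous_on A (E z)"
  unfolding E_def by (auto intro!: continuous_intros)

lemma isCont_E[continuous_intros]: "isCont (E z) x"
  unfolding E_def by (auto intro!: continuous_intros)

lemma meas_E[measurable]: "E z \<in> borel_measurable borel"
  by (intro borel_measurable_continuous_onI cont_E)

lemma deriv_E: "((E z) has_vector_derivative ((\<i> * z - complex_of_real x) * E z x)) (at x)"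
proof -
  have "((\<lambda>u. exp (\<i> * z * u - u\<^sup>2 / 2)) has_field_derivative
          ((\<i> * z - complex_of_real x) * exp (\<i> * z * complex_of_real x - (complex_of_real x)\<^sup>2 / 2)))
          (at (complex_of_real x))"
    by (auto intro!: derivative_eq_intros simp: algebra_simps)
  from has_vector_derivative_real_field[OF this] show ?thesis
    by (simp add: E_def[abs_def])
qed

definition I :: "nat \<Rightarrow> complex \<Rightarrow> real \<Rightarrow> complex" where
  "I k z x = indicator {0<..} x *\<^sub>R (complex_of_real x ^ k * E z x)"

definition Mk :: "nat \<Rightarrow> complex \<Rightarrow> complex" where
  "Mk k z = (\<integral>x. I k z x \<partial>lborel)"

lemma norm_pow_E: "norm (complex_of_real x ^ k * E z x) \<le> \<bar>x\<bar> ^ k * exp (\<bar>Im z\<bar> * \<bar>x\<bar> - x\<^sup>2 / 2)"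
  by (simp add: norm_mult norm_power mult_left_mono norm_E_le)

lemma int_I: "integrable lborel (I k z)"
proof (rule integrable_dom[where c="\<bar>Im z\<bar>" and j=k])
  show "I k z \<in> borel_measurable borel" unfolding I_def by measurable
  fix x show "norm (I k z x) \<le> \<bar>x\<bar> ^ k * exp (\<bar>Im z\<bar> * \<bar>x\<bar> - x\<^sup>2 / 2)"
    using norm_pow_E[of x k z] by (auto simp: I_def indicator_def)
qed simp

lemma Mk_rec1: "Mk 1 z = \<i> * z * Mk 0 z + 1"
proof -
  let ?f = "\<lambda>x. (\<i> * z - complex_of_real x) * E z x"
  have eq: "indicator {0<..} x *\<^sub>R ?f x = \<i> * z * I 0 z x - I 1 z x" for x
    by (simp add: I_def indicator_def algebra_simps)
  have "(\<integral>x. indicator {0<..} x *\<^sub>R ?f x \<partial>lborel) = - E z 0"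
  proof (rule ftc_half)
    show "(E z has_vector_derivative ?f x) (at x)" for x by (rule deriv_E)
    show "isCont ?f x" for x by (auto intro!: continuous_intros)
    show "integrable lborel (\<lambda>x. indicator {0<..} x *\<^sub>R ?f x)"
      unfolding eq by (intro Bochner_Integration.integrable_diff integrable_mult_right int_I)
    show "(E z \<longlongrightarrow> 0) at_top"
      by (rule tendsto_dom[where c="\<bar>Im z\<bar>" and j=0]) (use norm_E_le in auto)
  qed
  also have "E z 0 = 1" by (simp add: E_def)
  finally have "(\<integral>x. \<i> * z * I 0 z x - I 1 z x \<partial>lborel) = -1" unfolding eq .
  hence "\<i> * z * Mk 0 z - Mk 1 z = -1"
    unfolding Mk_def by (simp add: Bochner_Integration.integral_diff int_I)
  thus ?thesis by (simp add: algebra_simps)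
qed

lemma Mk_rec2: "Mk (Suc (Suc m)) z = \<i> * z * Mk (Suc m) z + of_nat (Suc m) * Mk m z"
proof -
  let ?F = "\<lambda>x. complex_of_real x ^ Suc m * E z x"
  let ?f = "\<lambda>x. of_nat (Suc m) * complex_of_real x ^ m * E z x
               + complex_of_real x ^ Suc m * ((\<i> * z - complex_of_real x) * E z x)"
  have eq: "indicator {0<..} x *\<^sub>R ?f x = of_nat (Suc m) * I m z x + \<i> * z * I (Suc m) z x
              - I (Suc (Suc m)) z x" for x
    by (simp add: I_def indicator_def algebra_simps)
  have "(\<integral>x. indicator {0<..} x *\<^sub>R ?f x \<partial>lborel) = - ?F 0"
  proof (rule ftc_half)
    show "(?F has_vector_derivative ?f x) (at x)" for x
    proof -
      have "((\<lambda>x. complex_of_real x ^ Suc m) has_vector_derivative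
              of_nat (Suc m) * complex_of_real x ^ m) (at x)"
        apply (rule has_vector_derivative_real_field)
        apply (rule derivative_eq_intros refl)+
        apply (cases m) apply (simp_all add: algebra_simps)
        done
      from has_vector_derivative_mult[OF this deriv_E[of z x]] show ?thesis
        by (simp add: algebra_simps)
    qed
    show "isCont ?f x" for x by (auto intro!: continuous_intros)
    show "integrable lborel (\<lambda>x. indicator {0<..} x *\<^sub>R ?f x)"
      unfolding eq by (intro Bochner_Integration.integrable_diff Bochner_Integration.integrable_add integrable_mult_right int_I)
    show "(?F \<longlongrightarrow> 0) at_top"
      by (rule tendsto_dom[where c="\<bar>Im z\<bar>" and j="Suc m"]) (simp_all only: norm_pow_E abs_ge_zero)
  qed
  also have "?F 0 = 0" by simp
  finally have "(\<integral>x. of_nat (Suc m) * I m z x + \<i> * z * I (Suc m) z x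
              - I (Suc (Suc m)) z x \<partial>lborel) = 0" unfolding eq by simp
  hence "of_nat (Suc m) * Mk m z + \<i> * z * Mk (Suc m) z - Mk (Suc (Suc m)) z = 0"
    unfolding Mk_def
    by (simp add: Bochner_Integration.integral_diff Bochner_Integration.integral_add int_I)
  thus ?thesis by (simp add: algebra_simps)
qed


lemma integrable_domK:
  fixes f :: "real \<Rightarrow> 'a::{banach, second_countable_topology}"
  assumes m: "f \<in> borel_measurable borel" and c: "c \<ge> 0" and K: "K \<ge> 0"
    and b: "\<And>x. norm (f x) \<le> K * (\<bar>x\<bar> ^ j * exp (c * \<bar>x\<bar> - x\<^sup>2 / 2))"
  shows "integrable lborel f"
proof (rule Bochner_Integration.integrable_bound)
  show "integrable lborel (\<lambda>x. K * (fact j * exp ((c + 1)\<^sup>2) * exp (- x\<^sup>2 / 4)))"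
    by (intro integrable_mult_right int_gauss4)
  show "f \<in> borel_measurable lborel" using m by simp
  show "AE x in lborel. norm (f x) \<le> norm (K * (fact j * exp ((c + 1)\<^sup>2) * exp (- x\<^sup>2 / 4)))"
  proof (intro AE_I2)
    fix x
    have "norm (f x) \<le> K * (fact j * exp ((c + 1)\<^sup>2) * exp (- x\<^sup>2 / 4))"
      using order_trans[OF b mult_left_mono[OF dom_bound[OF c] K]] .
    thus "norm (f x) \<le> norm (K * (fact j * exp ((c + 1)\<^sup>2) * exp (- x\<^sup>2 / 4)))"
      using K by simp
  qed
qed

definition g :: "complex \<Rightarrow> real \<Rightarrow> real \<Rightarrow> complex" where
  "g z t x = exp (- (complex_of_real x - \<i> * complex_of_real t * z)\<^sup>2 / 2)"

definition p :: "complex \<Rightarrow> real \<Rightarrow> real \<Rightarrow> complex" where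
  "p z t x = (complex_of_real x - \<i> * complex_of_real t * z) * g z t x"

lemma E_g: "E z x = g z 1 x * exp (- z\<^sup>2 / 2)"
  unfolding E_def g_def
  by (subst exp_add[symmetric]) (rule arg_cong[where f=exp], simp add: field_simps power2_eq_square)

lemma g0: "g z 0 x = exp (- (complex_of_real x)\<^sup>2 / 2)"
  by (simp add: g_def)

lemma g_at0: "g z t 0 = exp (complex_of_real t ^ 2 * z\<^sup>2 / 2)"
  by (simp add: g_def power2_eq_square algebra_simps)

lemma cont_g[continuous_intros]: "isCont (g z t) x" "isCont (\<lambda>t. g z t x) t"
  unfolding g_def by (auto intro!: continuous_intros)

lemma cont_p[continuous_intros]: "isCont (p z t) x" "isCont (\<lambda>t. p z t x) t"
  unfolding p_def by (auto intro!: continuous_intros)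

lemma deriv_g_t: "((\<lambda>t. g z t x) has_vector_derivative (\<i> * z * p z t x)) (at t within A)"
proof -
  have "((\<lambda>u. exp (- (complex_of_real x - \<i> * u * z)\<^sup>2 / 2)) has_field_derivative
          (\<i> * z * p z t x)) (at (complex_of_real t))"
    unfolding p_def g_def by (auto intro!: derivative_eq_intros simp: field_simps power2_eq_square)
  from has_vector_derivative_real_field[OF this] show ?thesis
    by (simp add: g_def[abs_def])
qed

lemma deriv_g_x: "((\<lambda>x. - g z t x) has_vector_derivative (p z t x)) (at x)"
proof -
  have "((\<lambda>u. - exp (- (u - \<i> * complex_of_real t * z)\<^sup>2 / 2)) has_field_derivative
          (p z t x)) (at (complex_of_real x))"
    unfolding p_def g_def by (auto intro!: derivative_eq_intros simp: field_simps power2_eq_square)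
  from has_vector_derivative_real_field[OF this] show ?thesis
    by (simp add: g_def[abs_def])
qed

lemma norm_g: "norm (g z t x) = exp (- ((x + t * Im z)\<^sup>2 - (t * Re z)\<^sup>2) / 2)"
  by (simp add: g_def power2_eq_square algebra_simps)

lemma norm_g_le:
  assumes t: "t \<in> {0..1}"
  shows "norm (g z t x) \<le> exp ((Re z)\<^sup>2 / 2) * exp (\<bar>Im z\<bar> * \<bar>x\<bar> - x\<^sup>2 / 2)"
proof -
  have t2: "t\<^sup>2 \<le> 1" using t by (auto simp: power_le_one)
  have "(t * Re z)\<^sup>2 \<le> (Re z)\<^sup>2" using t2 by (simp add: power_mult_distrib mult_left_le_one_le)
  moreover have "- (t * Im z * x) \<le> \<bar>Im z\<bar> * \<bar>x\<bar>"
  proof -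
    have "\<bar>t * Im z * x\<bar> \<le> \<bar>Im z\<bar> * \<bar>x\<bar>"
      using t by (simp add: abs_mult mult_le_cancel_right1 mult.assoc mult_left_le_one_le)
    thus ?thesis by linarith
  qed
  moreover have "0 \<le> (t * Im z)\<^sup>2" by simp
  moreover have "- ((x + t * Im z)\<^sup>2 - (t * Re z)\<^sup>2) / 2 =
     - x\<^sup>2 / 2 - t * Im z * x - (t * Im z)\<^sup>2 / 2 + (t * Re z)\<^sup>2 / 2"
    by (simp add: power2_eq_square field_simps)
  ultimately have "- ((x + t * Im z)\<^sup>2 - (t * Re z)\<^sup>2) / 2 \<le> (Re z)\<^sup>2 / 2 + (\<bar>Im z\<bar> * \<bar>x\<bar> - x\<^sup>2 / 2)"
    by linarith
  thus ?thesis by (simp add: norm_g exp_add[symmetric])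
qed


lemma tendsto_domK:
  fixes f :: "real \<Rightarrow> 'a::real_normed_vector"
  assumes c: "c \<ge> 0" and K: "K \<ge> 0"
    and b: "\<And>x. norm (f x) \<le> K * (\<bar>x\<bar> ^ j * exp (c * \<bar>x\<bar> - x\<^sup>2 / 2))"
  shows "(f \<longlongrightarrow> 0) at_top"
proof (rule Lim_null_comparison)
  show "\<forall>\<^sub>F x in at_top. norm (f x) \<le> K * (fact j * exp ((c + 1)\<^sup>2) * exp (- x\<^sup>2 / 4))"
    using order_trans[OF b mult_left_mono[OF dom_bound[OF c] K]] by simp
  show "((\<lambda>x. K * (fact j * exp ((c + 1)\<^sup>2) * exp (- x\<^sup>2 / 4))) \<longlongrightarrow> 0) at_top"
    by real_asymp
qed

definition q :: "complex \<Rightarrow> real \<Rightarrow> real \<Rightarrow> complex" where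
  "q z t x = \<i> * z * p z t x"

definition Cz :: "complex \<Rightarrow> real" where
  "Cz z = cmod z * (1 + cmod z) * exp ((Re z)\<^sup>2 / 2)"

lemma Cz_nonneg: "Cz z \<ge> 0" by (simp add: Cz_def)

lemma meas_g[measurable]: "(\<lambda>(t, x). g z t x) \<in> borel_measurable (lborel \<Otimes>\<^sub>M lborel)"
  unfolding g_def by measurable

lemma meas_p[measurable]: "(\<lambda>(t, x). p z t x) \<in> borel_measurable (lborel \<Otimes>\<^sub>M lborel)"
  unfolding p_def by measurable

lemma meas_q[measurable]: "(\<lambda>(t, x). q z t x) \<in> borel_measurable (lborel \<Otimes>\<^sub>M lborel)"
  unfolding q_def by measurable

lemma meas_g1[measurable]: "g z t \<in> borel_measurable borel"
  unfolding g_def by measurable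

lemma meas_p1[measurable]: "p z t \<in> borel_measurable borel"
  unfolding p_def by measurable

lemma meas_q1[measurable]: "q z t \<in> borel_measurable borel"
  unfolding q_def by measurable

lemma norm_g_le':
  assumes t: "t \<in> {0..1}"
  shows "norm (g z t x) \<le> exp ((Re z)\<^sup>2 / 2) * (\<bar>x\<bar> ^ 0 * exp (\<bar>Im z\<bar> * \<bar>x\<bar> - x\<^sup>2 / 2))"
  using norm_g_le[OF t] by simp

lemma norm_q_le:
  assumes t: "t \<in> {0..1}"
  shows "norm (q z t x) \<le> Cz z * (\<bar>x\<bar> ^ 0 * exp ((\<bar>Im z\<bar> + 1) * \<bar>x\<bar> - x\<^sup>2 / 2))"
proof -
  have n1: "norm (complex_of_real x - \<i> * complex_of_real t * z) \<le> \<bar>x\<bar> + cmod z"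
  proof -
    have "norm (complex_of_real x - \<i> * complex_of_real t * z) \<le> norm (complex_of_real x) + norm (\<i> * complex_of_real t * z)"
      by (rule norm_triangle_ineq4)
    also have "norm (\<i> * complex_of_real t * z) = \<bar>t\<bar> * cmod z" by (simp add: norm_mult)
    also have "\<bar>t\<bar> * cmod z \<le> cmod z" using t by (simp add: mult_left_le_one_le)
    finally show ?thesis by simp
  qed
  have n2: "\<bar>x\<bar> + cmod z \<le> (1 + cmod z) * exp \<bar>x\<bar>"
  proof -
    have "1 + \<bar>x\<bar> \<le> exp \<bar>x\<bar>" by (rule exp_ge_add_one_self)
    hence "(1 + cmod z) * (1 + \<bar>x\<bar>) \<le> (1 + cmod z) * exp \<bar>x\<bar>" by (intro mult_left_mono) auto
    moreover have "\<bar>x\<bar> + cmod z \<le> (1 + cmod z) * (1 + \<bar>x\<bar>)" by (simp add: algebra_simps)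
    ultimately show ?thesis by linarith
  qed
  have "norm (q z t x) = cmod z * (norm (complex_of_real x - \<i> * complex_of_real t * z) * norm (g z t x))"
    by (simp add: q_def p_def norm_mult)
  also have "\<dots> \<le> cmod z * (((1 + cmod z) * exp \<bar>x\<bar>) * (exp ((Re z)\<^sup>2 / 2) * exp (\<bar>Im z\<bar> * \<bar>x\<bar> - x\<^sup>2 / 2)))"
    by (intro mult_left_mono mult_mono order_trans[OF n1 n2] norm_g_le[OF t]) auto
  also have "\<dots> = Cz z * (\<bar>x\<bar> ^ 0 * exp ((\<bar>Im z\<bar> + 1) * \<bar>x\<bar> - x\<^sup>2 / 2))"
    by (simp add: Cz_def exp_add[symmetric] algebra_simps)
  finally show ?thesis .
qed

definition Phi :: "complex \<Rightarrow> real \<Rightarrow> real \<Rightarrow> complex" where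
  "Phi z t x = indicator {0..1} t *\<^sub>R (indicator {0<..} x *\<^sub>R q z t x)"

lemma meas_Phi[measurable]: "(\<lambda>(t, x). Phi z t x) \<in> borel_measurable (lborel \<Otimes>\<^sub>M lborel)"
  unfolding Phi_def by measurable

lemma meas_Phi1[measurable]: "Phi z t \<in> borel_measurable borel"
  unfolding Phi_def by measurable

lemma norm_Phi_le: "norm (Phi z t x) \<le> indicator {0..1} t * (Cz z * (\<bar>x\<bar> ^ 0 * exp ((\<bar>Im z\<bar> + 1) * \<bar>x\<bar> - x\<^sup>2 / 2)))"
proof (cases "t \<in> {0..1}")
  case True
  then show ?thesis using norm_q_le[OF True, of z x] Cz_nonneg[of z]
    by (auto simp: Phi_def indicator_def)
qed (simp add: Phi_def)

lemma norm_Phi_le2: "norm (Phi z t x) \<le> Cz z * (\<bar>x\<bar> ^ 0 * exp ((\<bar>Im z\<bar> + 1) * \<bar>x\<bar> - x\<^sup>2 / 2))"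
proof -
  have "0 \<le> Cz z * (\<bar>x\<bar> ^ 0 * exp ((\<bar>Im z\<bar> + 1) * \<bar>x\<bar> - x\<^sup>2 / 2))"
    using Cz_nonneg[of z] by simp
  thus ?thesis using norm_Phi_le[of z t x] by (cases "t \<in> {0..1}") auto
qed

lemma int_Phi_x: "integrable lborel (Phi z t)"
proof (rule integrable_domK[where c="\<bar>Im z\<bar> + 1" and K="Cz z" and j=0])
  fix x show "norm (Phi z t x) \<le> Cz z * (\<bar>x\<bar> ^ 0 * exp ((\<bar>Im z\<bar> + 1) * \<bar>x\<bar> - x\<^sup>2 / 2))"
    by (rule norm_Phi_le2)
qed (auto simp: Cz_nonneg)


definition Bf :: "complex \<Rightarrow> real \<Rightarrow> real" where
  "Bf z x = Cz z * exp ((\<bar>Im z\<bar> + 1) * \<bar>x\<bar> - x\<^sup>2 / 2)"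

lemma int_Bf: "integrable lborel (Bf z)"
proof (rule integrable_domK[where c="\<bar>Im z\<bar> + 1" and K="Cz z" and j=0])
  show "Bf z \<in> borel_measurable borel" unfolding Bf_def by measurable
qed (auto simp: Cz_nonneg Bf_def)

lemma int_ind01: "integrable lborel (\<lambda>t::real. indicator {0..1} t * (c::real))"
  by (intro Bochner_Integration.integrable_mult_left integrable_real_indicator) auto

lemma Fubini_int: "integrable (lborel \<Otimes>\<^sub>M lborel) (\<lambda>(t, x). Phi z t x)"
proof (rule lborel_pair.Fubini_integrable)
  show "(\<lambda>(t, x). Phi z t x) \<in> borel_measurable (lborel \<Otimes>\<^sub>M lborel)" by measurable
  show "AE t in lborel. integrable lborel (\<lambda>x. case (t, x) of (t, x) \<Rightarrow> Phi z t x)"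
    by (simp add: int_Phi_x)
  let ?KK = "\<integral>x. Bf z x \<partial>lborel"
  have KK: "?KK \<ge> 0" by (intro integral_nonneg_AE) (auto simp: Bf_def Cz_nonneg)
  show "integrable lborel (\<lambda>t. \<integral>x. norm (case (t, x) of (t, x) \<Rightarrow> Phi z t x) \<partial>lborel)"
  proof (rule Bochner_Integration.integrable_bound[OF int_ind01[of ?KK]])
    show "(\<lambda>t. \<integral>x. norm (case (t, x) of (t, x) \<Rightarrow> Phi z t x) \<partial>lborel) \<in> borel_measurable lborel"
      by measurable
    show "AE t in lborel. norm (\<integral>x. norm (case (t, x) of (t, x) \<Rightarrow> Phi z t x) \<partial>lborel)
           \<le> norm (indicator {0..1} t * ?KK)"
    proof (intro AE_I2)
      fix t
      have "(\<integral>x. norm (Phi z t x) \<partial>lborel) \<le> (\<integral>x. indicator {0..1} t * Bf z x \<partial>lborel)"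
      proof (rule integral_mono)
        show "integrable lborel (\<lambda>x. norm (Phi z t x))" by (intro integrable_norm int_Phi_x)
        show "integrable lborel (\<lambda>x. indicator {0..1} t * Bf z x)" by (intro integrable_mult_right int_Bf)
        show "norm (Phi z t x) \<le> indicator {0..1} t * Bf z x" for x
          using norm_Phi_le[of z t x] by (simp add: Bf_def)
      qed
      also have "\<dots> = indicator {0..1} t * ?KK" by simp
      finally have "(\<integral>x. norm (Phi z t x) \<partial>lborel) \<le> indicator {0..1} t * ?KK" .
      moreover have "(\<integral>x. norm (Phi z t x) \<partial>lborel) \<ge> 0" by (intro integral_nonneg_AE) auto
      ultimately show "norm (\<integral>x. norm (case (t, x) of (t, x) \<Rightarrow> Phi z t x) \<partial>lborel)
           \<le> norm (indicator {0..1} t * ?KK)" using KK by (simp add: indicator_def)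
    qed
  qed
qed

lemma Fubini_eq: "(\<integral>x. (\<integral>t. Phi z t x \<partial>lborel) \<partial>lborel) = (\<integral>t. (\<integral>x. Phi z t x \<partial>lborel) \<partial>lborel)"
  by (rule lborel_pair.Fubini_integral) (use Fubini_int in simp)


lemma norm_p_le:
  assumes t: "t \<in> {0..1}"
  shows "norm (p z t x) \<le> ((1 + cmod z) * exp ((Re z)\<^sup>2 / 2)) * (\<bar>x\<bar> ^ 0 * exp ((\<bar>Im z\<bar> + 1) * \<bar>x\<bar> - x\<^sup>2 / 2))"
proof -
  have n1: "norm (complex_of_real x - \<i> * complex_of_real t * z) \<le> \<bar>x\<bar> + cmod z"
  proof -
    have "norm (complex_of_real x - \<i> * complex_of_real t * z) \<le> norm (complex_of_real x) + norm (\<i> * complex_of_real t * z)"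
      by (rule norm_triangle_ineq4)
    also have "norm (\<i> * complex_of_real t * z) = \<bar>t\<bar> * cmod z" by (simp add: norm_mult)
    also have "\<bar>t\<bar> * cmod z \<le> cmod z" using t by (simp add: mult_left_le_one_le)
    finally show ?thesis by simp
  qed
  have n2: "\<bar>x\<bar> + cmod z \<le> (1 + cmod z) * exp \<bar>x\<bar>"
  proof -
    have "1 + \<bar>x\<bar> \<le> exp \<bar>x\<bar>" by (rule exp_ge_add_one_self)
    hence "(1 + cmod z) * (1 + \<bar>x\<bar>) \<le> (1 + cmod z) * exp \<bar>x\<bar>" by (intro mult_left_mono) auto
    moreover have "\<bar>x\<bar> + cmod z \<le> (1 + cmod z) * (1 + \<bar>x\<bar>)" by (simp add: algebra_simps)
    ultimately show ?thesis by linarith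
  qed
  have "norm (p z t x) = norm (complex_of_real x - \<i> * complex_of_real t * z) * norm (g z t x)"
    by (simp add: p_def norm_mult)
  also have "\<dots> \<le> ((1 + cmod z) * exp \<bar>x\<bar>) * (exp ((Re z)\<^sup>2 / 2) * exp (\<bar>Im z\<bar> * \<bar>x\<bar> - x\<^sup>2 / 2))"
    by (intro mult_mono order_trans[OF n1 n2] norm_g_le[OF t]) auto
  also have "\<dots> = ((1 + cmod z) * exp ((Re z)\<^sup>2 / 2)) * (\<bar>x\<bar> ^ 0 * exp ((\<bar>Im z\<bar> + 1) * \<bar>x\<bar> - x\<^sup>2 / 2))"
    by (simp add: exp_add[symmetric] algebra_simps)
  finally show ?thesis .
qed

lemma inner_t: "(\<integral>t. Phi z t x \<partial>lborel) = indicator {0<..} x *\<^sub>R (g z 1 x - g z 0 x)"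
proof -
  have "(\<integral>t. Phi z t x \<partial>lborel) = (\<integral>t. indicator {0<..} x *\<^sub>R (indicator {0..1} t *\<^sub>R q z t x) \<partial>lborel)"
    unfolding Phi_def by (simp add: mult.commute)
  also have "\<dots> = indicator {0<..} x *\<^sub>R (\<integral>t. indicator {0..1} t *\<^sub>R q z t x \<partial>lborel)"
    by (rule integral_scaleR_right)
  also have "(\<integral>t. indicator {0..1} t *\<^sub>R q z t x \<partial>lborel) = g z 1 x - g z 0 x"
  proof (rule integral_FTC_Icc)
    show "((\<lambda>t. g z t x) has_vector_derivative q z t x) (at t within {0..1})" for t
      unfolding q_def by (rule deriv_g_t)
    show "continuous_on {0..1} (\<lambda>t. q z t x)"
      unfolding q_def by (intro continuous_at_imp_continuous_on ballI continuous_intros)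
  qed simp
  finally show ?thesis .
qed

lemma inner_x: "(\<integral>x. Phi z t x \<partial>lborel) = indicator {0..1} t *\<^sub>R (\<i> * z * g z t 0)"
proof (cases "t \<in> {0..1}")
  case False
  then show ?thesis by (simp add: Phi_def)
next
  case True
  have "(\<integral>x. indicator {0<..} x *\<^sub>R p z t x \<partial>lborel) = - (- g z t 0)"
  proof (rule ftc_half)
    show "((\<lambda>x. - g z t x) has_vector_derivative p z t x) (at x)" for x by (rule deriv_g_x)
    show "isCont (p z t) x" for x by (rule cont_p)
    show "integrable lborel (\<lambda>x. indicator {0<..} x *\<^sub>R p z t x)"
    proof (rule integrable_domK[where c="\<bar>Im z\<bar> + 1" and K="(1 + cmod z) * exp ((Re z)\<^sup>2 / 2)" and j=0])
      fix x show "norm (indicator {0<..} x *\<^sub>R p z t x) \<le> ((1 + cmod z) * exp ((Re z)\<^sup>2 / 2)) * (\<bar>x\<bar> ^ 0 * exp ((\<bar>Im z\<bar> + 1) * \<bar>x\<bar> - x\<^sup>2 / 2))"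
        using norm_p_le[OF True, of z x] by (auto simp: indicator_def)
    qed auto
    show "((\<lambda>x. - g z t x) \<longlongrightarrow> 0) at_top"
      by (rule tendsto_domK[where c="\<bar>Im z\<bar>" and K="exp ((Re z)\<^sup>2 / 2)" and j=0])
         (use norm_g_le'[OF True] in auto)
  qed
  hence eq: "(\<integral>x. indicator {0<..} x *\<^sub>R p z t x \<partial>lborel) = g z t 0" by simp
  have "(\<integral>x. Phi z t x \<partial>lborel) = (\<integral>x. \<i> * z * (indicator {0<..} x *\<^sub>R p z t x) \<partial>lborel)"
    using True unfolding Phi_def q_def by (intro Bochner_Integration.integral_cong) (auto simp: indicator_def)
  also have "\<dots> = \<i> * z * g z t 0" by (subst integral_mult_right_zero) (simp only: eq)
  finally show ?thesis using True by simp
qed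


definition Acon :: complex where
  "Acon = (\<integral>x. indicator {0<..} x *\<^sub>R exp (- (complex_of_real x)\<^sup>2 / 2) \<partial>lborel)"

definition T :: "complex \<Rightarrow> complex" where
  "T z = (\<integral>t. indicator {0..1} t *\<^sub>R (\<i> * z * exp (complex_of_real t ^ 2 * z\<^sup>2 / 2)) \<partial>lborel)"

lemma int_ind_g: "t \<in> {0..1} \<Longrightarrow> integrable lborel (\<lambda>x. indicator {0<..} x *\<^sub>R g z t x)"
proof (rule integrable_domK[where c="\<bar>Im z\<bar>" and K="exp ((Re z)\<^sup>2 / 2)" and j=0])
  fix x assume t: "t \<in> {0..1}"
  show "norm (indicator {0<..} x *\<^sub>R g z t x) \<le> exp ((Re z)\<^sup>2 / 2) * (\<bar>x\<bar> ^ 0 * exp (\<bar>Im z\<bar> * \<bar>x\<bar> - x\<^sup>2 / 2))"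
    using norm_g_le'[OF t, of z x] by (auto simp: indicator_def)
qed auto

lemma key_eq: "(\<integral>x. indicator {0<..} x *\<^sub>R g z 1 x \<partial>lborel) = Acon + T z"
proof -
  have "(\<integral>x. (\<integral>t. Phi z t x \<partial>lborel) \<partial>lborel) = (\<integral>x. indicator {0<..} x *\<^sub>R g z 1 x - indicator {0<..} x *\<^sub>R g z 0 x \<partial>lborel)"
    by (simp add: inner_t scaleR_diff_right)
  also have "\<dots> = (\<integral>x. indicator {0<..} x *\<^sub>R g z 1 x \<partial>lborel) - Acon"
  proof -
    have i1: "integrable lborel (\<lambda>x. indicator {0<..} x *\<^sub>R g z 1 x)" by (rule int_ind_g) simp
    have i0: "integrable lborel (\<lambda>x. indicator {0<..} x *\<^sub>R g z 0 x)" by (rule int_ind_g) simp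
    have "Acon = (\<integral>x. indicator {0<..} x *\<^sub>R g z 0 x \<partial>lborel)" by (simp add: Acon_def g0)
    thus ?thesis by (simp only: Bochner_Integration.integral_diff[OF i1 i0])
  qed
  finally have 1: "(\<integral>x. (\<integral>t. Phi z t x \<partial>lborel) \<partial>lborel) = (\<integral>x. indicator {0<..} x *\<^sub>R g z 1 x \<partial>lborel) - Acon" .
  have 2: "(\<integral>t. (\<integral>x. Phi z t x \<partial>lborel) \<partial>lborel) = T z"
    by (simp add: inner_x g_at0 T_def)
  from Fubini_eq[of z] 1 2 show ?thesis by (simp add: algebra_simps)
qed

lemma exp_t_le:
  assumes t: "t \<in> {0..1::real}"
  shows "exp (t\<^sup>2 * d / 2) \<le> 1 + exp (d / 2)"
proof (cases "d \<ge> 0")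
  case True
  have "t\<^sup>2 \<le> 1" using t by (auto simp: power_le_one)
  hence "t\<^sup>2 * d \<le> d" using True by (simp add: mult_left_le_one_le)
  hence "exp (t\<^sup>2 * d / 2) \<le> exp (d / 2)" by simp
  thus ?thesis by (smt (verit) exp_gt_zero)
next
  case False
  hence "t\<^sup>2 * d \<le> 0" by (simp add: mult_nonneg_nonpos)
  hence "exp (t\<^sup>2 * d / 2) \<le> 1" by simp
  thus ?thesis by (smt (verit) exp_gt_zero)
qed

lemma T_bound: "norm (T z) \<le> cmod z * (1 + exp (((Re z)\<^sup>2 - (Im z)\<^sup>2) / 2))"
proof -
  let ?c = "cmod z * (1 + exp (((Re z)\<^sup>2 - (Im z)\<^sup>2) / 2))"
  have "norm (T z) \<le> (\<integral>t. indicator {0..1} (t::real) * ?c \<partial>lborel)"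
    unfolding T_def
  proof (rule order_trans[OF integral_norm_bound integral_mono])
    show "integrable lborel (\<lambda>t::real. indicator {0..1} t * ?c)" by (rule int_ind01)
    show "integrable lborel (\<lambda>t. norm (indicator {0..1} t *\<^sub>R (\<i> * z * exp (complex_of_real t ^ 2 * z\<^sup>2 / 2))))"
      by (rule integrable_norm, rule borel_integrable_compact) (auto intro!: continuous_intros)
    fix t
    show "norm (indicator {0..1} t *\<^sub>R (\<i> * z * exp (complex_of_real t ^ 2 * z\<^sup>2 / 2))) \<le> indicator {0..1} t * ?c"
    proof (cases "t \<in> {0..1}")
      case True
      have "norm (\<i> * z * exp (complex_of_real t ^ 2 * z\<^sup>2 / 2)) = cmod z * exp (t\<^sup>2 * ((Re z)\<^sup>2 - (Im z)\<^sup>2) / 2)"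
        by (simp add: norm_mult power2_eq_square algebra_simps)
      also have "\<dots> \<le> ?c" by (intro mult_left_mono exp_t_le True) auto
      finally show ?thesis using True by simp
    qed simp
  qed
  also have "\<dots> = ?c" by simp
  finally show ?thesis .
qed

lemma M0_eq: "Mk 0 z = (Acon + T z) * exp (- z\<^sup>2 / 2)"
proof -
  have "Mk 0 z = (\<integral>x. (indicator {0<..} x *\<^sub>R g z 1 x) * exp (- z\<^sup>2 / 2) \<partial>lborel)"
    unfolding Mk_def I_def by (intro Bochner_Integration.integral_cong) (auto simp: E_g)
  also have "\<dots> = (Acon + T z) * exp (- z\<^sup>2 / 2)"
    by (subst integral_mult_left_zero) (simp only: key_eq)
  finally show ?thesis .
qed

lemma M0_bound: "norm (Mk 0 z) \<le> (cmod Acon + 1) * (1 + cmod z) * (1 + exp (((Im z)\<^sup>2 - (Re z)\<^sup>2) / 2))"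
proof -
  define Q where "Q = exp (((Im z)\<^sup>2 - (Re z)\<^sup>2) / 2)"
  define Q' where "Q' = exp (((Re z)\<^sup>2 - (Im z)\<^sup>2) / 2)"
  have QQ: "Q * Q' = 1" by (simp add: Q_def Q'_def exp_add[symmetric] field_simps)
  have nQ: "norm (exp (- z\<^sup>2 / 2)) = Q" by (simp add: Q_def power2_eq_square field_simps)
  have "norm (Mk 0 z) = norm (Acon + T z) * Q" by (simp only: M0_eq norm_mult nQ)
  also have "\<dots> \<le> (cmod Acon + cmod z * (1 + Q')) * Q"
  proof (intro mult_right_mono)
    show "norm (Acon + T z) \<le> cmod Acon + cmod z * (1 + Q')"
      using norm_triangle_ineq[of Acon "T z"] T_bound[of z] unfolding Q'_def by linarith
  qed (simp add: Q_def)
  also have "\<dots> = cmod Acon * Q + cmod z * (Q + 1)" using QQ by (simp add: algebra_simps)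
  also have "\<dots> \<le> (cmod Acon + 1) * (1 + cmod z) * (1 + Q)"
  proof -
    have "0 \<le> Q" by (simp add: Q_def)
    moreover have "0 \<le> cmod Acon" "0 \<le> cmod z" by auto
    ultimately show ?thesis by (simp add: algebra_simps mult_nonneg_nonneg add_nonneg_nonneg)
  qed
  finally show ?thesis unfolding Q_def .
qed


definition Qz :: "complex \<Rightarrow> real" where
  "Qz z = exp (((Im z)\<^sup>2 - (Re z)\<^sup>2) / 2)"

definition PB :: "nat \<Rightarrow> bool" where
  "PB k \<longleftrightarrow> (\<exists>C\<ge>0. \<forall>z. norm (Mk k z) \<le> C * (1 + cmod z) ^ Suc k * (1 + Qz z))"

lemma PB0: "PB 0"
  unfolding PB_def using M0_bound by (intro exI[of _ "cmod Acon + 1"]) (auto simp: Qz_def)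

lemma PB1: "PB 1"
proof -
  obtain C where C: "C \<ge> 0" "\<And>z. norm (Mk 0 z) \<le> C * (1 + cmod z) ^ 1 * (1 + Qz z)"
    using PB0 unfolding PB_def by auto
  show ?thesis unfolding PB_def
  proof (intro exI[of _ "C + 1"] conjI allI)
    fix z
    define u where "u = 1 + cmod z"
    define R where "R = 1 + Qz z"
    have u: "u \<ge> 1" "cmod z \<le> u" by (auto simp: u_def)
    have R: "R \<ge> 1" by (simp add: R_def Qz_def)
    have M0: "norm (Mk 0 z) \<le> C * u * R" using C(2)[of z] by (simp add: u_def R_def)
    have "norm (Mk 1 z) \<le> cmod z * norm (Mk 0 z) + 1"
      unfolding Mk_rec1 using norm_triangle_ineq[of "\<i> * z * Mk 0 z" 1] by (simp add: norm_mult)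
    also have "\<dots> \<le> u * (C * u * R) + 1"
      using u M0 by (intro add_mono mult_mono) auto
    also have "\<dots> \<le> (C + 1) * u ^ Suc 1 * R"
    proof -
      have "1 * 1 \<le> u * u" using u by (intro mult_mono) auto
      hence "1 * 1 \<le> (u * u) * R" using R by (intro mult_mono) auto
      hence "1 \<le> u * u * R" by simp
      thus ?thesis by (simp add: algebra_simps power2_eq_square)
    qed
    finally show "norm (Mk 1 z) \<le> (C + 1) * (1 + cmod z) ^ Suc 1 * (1 + Qz z)"
      by (simp add: u_def R_def)
  qed (use C in auto)
qed

lemma PB_step:
  assumes "PB k" "PB (Suc k)" shows "PB (Suc (Suc k))"
proof -
  obtain C0 where C0: "C0 \<ge> 0" "\<And>z. norm (Mk k z) \<le> C0 * (1 + cmod z) ^ Suc k * (1 + Qz z)"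
    using assms(1) unfolding PB_def by auto
  obtain C1 where C1: "C1 \<ge> 0" "\<And>z. norm (Mk (Suc k) z) \<le> C1 * (1 + cmod z) ^ Suc (Suc k) * (1 + Qz z)"
    using assms(2) unfolding PB_def by auto
  show ?thesis unfolding PB_def
  proof (intro exI[of _ "C1 + real (Suc k) * C0"] conjI allI)
    fix z
    define u where "u = 1 + cmod z"
    define R where "R = 1 + Qz z"
    have u: "u \<ge> 1" "cmod z \<le> u" by (auto simp: u_def)
    have R: "R \<ge> 1" by (simp add: R_def Qz_def)
    have M0: "norm (Mk k z) \<le> C0 * u ^ Suc k * R" using C0(2)[of z] by (simp add: u_def R_def)
    have M1: "norm (Mk (Suc k) z) \<le> C1 * u ^ Suc (Suc k) * R" using C1(2)[of z] by (simp add: u_def R_def)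
    have "norm (Mk (Suc (Suc k)) z) \<le> cmod z * norm (Mk (Suc k) z) + real (Suc k) * norm (Mk k z)"
      unfolding Mk_rec2 using norm_triangle_ineq[of "\<i> * z * Mk (Suc k) z" "of_nat (Suc k) * Mk k z"]
      by (simp add: norm_mult norm_of_nat del: of_nat_Suc)
    also have "\<dots> \<le> u * (C1 * u ^ Suc (Suc k) * R) + real (Suc k) * (C0 * u ^ Suc k * R)"
      using u M0 M1 by (intro add_mono mult_mono mult_left_mono) auto
    also have "\<dots> \<le> (C1 + real (Suc k) * C0) * u ^ Suc (Suc (Suc k)) * R"
    proof -
      have "u ^ Suc k \<le> u ^ Suc (Suc (Suc k))" using u by (intro power_increasing) auto
      hence "real (Suc k) * (C0 * u ^ Suc k * R) \<le> real (Suc k) * (C0 * u ^ Suc (Suc (Suc k)) * R)"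
        using C0(1) R by (intro mult_left_mono mult_right_mono) auto
      thus ?thesis by (simp add: algebra_simps)
    qed
    finally show "norm (Mk (Suc (Suc k)) z) \<le> (C1 + real (Suc k) * C0) * (1 + cmod z) ^ Suc (Suc (Suc k)) * (1 + Qz z)"
      by (simp add: u_def R_def)
  qed (use C0 C1 in auto)
qed

lemma PB_all: "PB k"
proof -
  have "PB k \<and> PB (Suc k)"
    by (induction k) (use PB0 PB1 PB_step in auto)
  thus ?thesis by simp
qed


definition J :: "nat \<Rightarrow> complex \<Rightarrow> complex" where
  "J k z = (\<integral>x. complex_of_real (\<bar>x\<bar> ^ k) * E z x \<partial>lborel)"

lemma E_neg: "E z (- x) = E (- z) x"
  by (simp add: E_def)

lemma J_split: "J k z = Mk k z + Mk k (- z)"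
proof -
  let ?f = "\<lambda>x. complex_of_real (\<bar>x\<bar> ^ k) * E z x"
  have bnd: "norm (S x *\<^sub>R ?f x) \<le> 1 * (\<bar>x\<bar> ^ k * exp (\<bar>Im z\<bar> * \<bar>x\<bar> - x\<^sup>2 / 2))"
    if "\<And>x. \<bar>S x\<bar> \<le> 1" for S :: "real \<Rightarrow> real" and x
  proof -
    have "norm (S x *\<^sub>R ?f x) = \<bar>S x\<bar> * (\<bar>x\<bar> ^ k * norm (E z x))"
      by (simp add: norm_mult norm_power)
    also have "\<dots> \<le> 1 * (\<bar>x\<bar> ^ k * exp (\<bar>Im z\<bar> * \<bar>x\<bar> - x\<^sup>2 / 2))"
      using that[of x] by (intro mult_mono mult_left_mono norm_E_le) auto
    finally show ?thesis .
  qed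
  have int1: "integrable lborel (\<lambda>x. indicator {0<..} x *\<^sub>R ?f x)"
  proof (rule integrable_domK[where c="\<bar>Im z\<bar>" and K=1 and j=k])
    fix x show "norm (indicator {0<..} x *\<^sub>R ?f x) \<le> 1 * (\<bar>x\<bar> ^ k * exp (\<bar>Im z\<bar> * \<bar>x\<bar> - x\<^sup>2 / 2))"
      by (rule bnd) (simp add: indicator_def)
  qed auto
  have int2: "integrable lborel (\<lambda>x. indicator {..0} x *\<^sub>R ?f x)"
  proof (rule integrable_domK[where c="\<bar>Im z\<bar>" and K=1 and j=k])
    fix x show "norm (indicator {..0} x *\<^sub>R ?f x) \<le> 1 * (\<bar>x\<bar> ^ k * exp (\<bar>Im z\<bar> * \<bar>x\<bar> - x\<^sup>2 / 2))"
      by (rule bnd) (simp add: indicator_def)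
  qed auto
  have "J k z = (\<integral>x. indicator {0<..} x *\<^sub>R ?f x + indicator {..0} x *\<^sub>R ?f x \<partial>lborel)"
    unfolding J_def by (intro Bochner_Integration.integral_cong) (auto simp: indicator_def)
  also have "\<dots> = (\<integral>x. indicator {0<..} x *\<^sub>R ?f x \<partial>lborel) + (\<integral>x. indicator {..0} x *\<^sub>R ?f x \<partial>lborel)"
    by (rule Bochner_Integration.integral_add[OF int1 int2])
  also have "(\<integral>x. indicator {0<..} x *\<^sub>R ?f x \<partial>lborel) = Mk k z"
    unfolding Mk_def I_def by (intro Bochner_Integration.integral_cong) (auto simp: indicator_def)
  also have "(\<integral>x. indicator {..0} x *\<^sub>R ?f x \<partial>lborel) = 
      \<bar>- 1\<bar> *\<^sub>R (\<integral>x. indicator {..0} (0 + - 1 * x) *\<^sub>R ?f (0 + - 1 * x) \<partial>lborel)"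
    by (rule lborel_integral_real_affine) simp
  also have "\<dots> = Mk k (- z)"
    unfolding Mk_def I_def
    by (simp, intro integral_cong_AE)
       (auto intro!: eventually_mono[OF AE_lborel_singleton[of 0]] simp: indicator_def E_neg)
  finally show ?thesis .
qed

lemma J_bound: "\<exists>C\<ge>0. \<forall>z. norm (J k z) \<le> C * (1 + cmod z) ^ Suc k * (1 + Qz z)"
proof -
  obtain C where C: "C \<ge> 0" "\<And>z. norm (Mk k z) \<le> C * (1 + cmod z) ^ Suc k * (1 + Qz z)"
    using PB_all[of k] unfolding PB_def by auto
  have Qn: "Qz (- z) = Qz z" for z by (simp add: Qz_def)
  show ?thesis
  proof (intro exI[of _ "2 * C"] conjI allI)
    fix z
    have "norm (J k z) \<le> norm (Mk k z) + norm (Mk k (- z))"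
      unfolding J_split by (rule norm_triangle_ineq)
    also have "\<dots> \<le> C * (1 + cmod z) ^ Suc k * (1 + Qz z) + C * (1 + cmod z) ^ Suc k * (1 + Qz z)"
      using add_mono[OF C(2)[of z] C(2)[of "- z"]] by (simp only: Qn norm_minus_cancel)
    finally show "norm (J k z) \<le> 2 * C * (1 + cmod z) ^ Suc k * (1 + Qz z)" by (simp add: mult_ac)
  qed (use C in auto)
qed


lemma gauss_char:
  "(\<integral>x. exp (- x\<^sup>2 / 2) *\<^sub>R exp (\<i> * complex_of_real (\<theta> * x)) \<partial>lborel) =
     complex_of_real (sqrt (2 * pi) * exp (- \<theta>\<^sup>2 / 2))"
proof -
  have "char std_normal_distribution \<theta> = complex_of_real (exp (- \<theta>\<^sup>2 / 2))"
    by (simp add: char_std_normal_distribution)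
  hence "(\<integral>x. std_normal_density x *\<^sub>R exp (\<i> * complex_of_real (\<theta> * x)) \<partial>lborel) = complex_of_real (exp (- \<theta>\<^sup>2 / 2))"
    unfolding char_def by (subst (asm) integral_density) auto
  hence "(\<integral>x. (1 / sqrt (2 * pi)) *\<^sub>R (exp (- x\<^sup>2 / 2) *\<^sub>R exp (\<i> * complex_of_real (\<theta> * x))) \<partial>lborel) = complex_of_real (exp (- \<theta>\<^sup>2 / 2))"
    by (simp add: std_normal_density_def)
  hence "(1 / sqrt (2 * pi)) *\<^sub>R (\<integral>x. exp (- x\<^sup>2 / 2) *\<^sub>R exp (\<i> * complex_of_real (\<theta> * x)) \<partial>lborel) = complex_of_real (exp (- \<theta>\<^sup>2 / 2))"
    by (simp only: integral_scaleR_right)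
  hence "sqrt (2 * pi) *\<^sub>R ((1 / sqrt (2 * pi)) *\<^sub>R (\<integral>x. exp (- x\<^sup>2 / 2) *\<^sub>R exp (\<i> * complex_of_real (\<theta> * x)) \<partial>lborel)) = sqrt (2 * pi) *\<^sub>R complex_of_real (exp (- \<theta>\<^sup>2 / 2))"
    by simp
  thus ?thesis by (simp add: scaleR_conv_of_real)
qed

lemma pt_eq:
  fixes s a b \<sigma> y :: real
  assumes s: "s > 0"
  shows "exp (- \<i> * complex_of_real (\<sigma> * (a + s * y))) *
         exp (- ((complex_of_real (a + s * y) - (complex_of_real a + \<i> * complex_of_real b)) ^ 2) / complex_of_real (2 * s\<^sup>2))
       = exp (- \<i> * complex_of_real (\<sigma> * a) + complex_of_real (b\<^sup>2 / (2 * s\<^sup>2))) *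
         (exp (- y\<^sup>2 / 2) *\<^sub>R exp (\<i> * complex_of_real ((b / s - \<sigma> * s) * y)))"
proof -
  have sz: "complex_of_real s \<noteq> 0" using s by simp
  have "exp (- y\<^sup>2 / 2) *\<^sub>R exp (\<i> * complex_of_real ((b / s - \<sigma> * s) * y)) =
        exp (complex_of_real (- y\<^sup>2 / 2) + \<i> * complex_of_real ((b / s - \<sigma> * s) * y))"
    by (simp only: scaleR_conv_of_real exp_of_real exp_add)
  moreover have "- \<i> * complex_of_real (\<sigma> * (a + s * y)) +
         (- ((complex_of_real (a + s * y) - (complex_of_real a + \<i> * complex_of_real b)) ^ 2) / complex_of_real (2 * s\<^sup>2))
      = - \<i> * complex_of_real (\<sigma> * a) + complex_of_real (b\<^sup>2 / (2 * s\<^sup>2)) +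
        (complex_of_real (- y\<^sup>2 / 2) + \<i> * complex_of_real ((b / s - \<sigma> * s) * y))"
    using sz by (simp add: field_simps power2_eq_square)
  ultimately show ?thesis by (simp add: exp_add[symmetric])
qed


lemma fourier_gauss:
  assumes h: "h > 0"
  shows "fourier_R (\<lambda>t. exp (- ((complex_of_real t - w) ^ 2) / complex_of_real (2 * h))) \<sigma>
       = complex_of_real (sqrt (2 * pi * h)) * exp (- complex_of_real (h * \<sigma>\<^sup>2 / 2) - \<i> * complex_of_real \<sigma> * w)"
proof -
  define s where "s = sqrt h"
  have s: "s > 0" using h by (simp add: s_def)
  have hs: "h = s\<^sup>2" using h by (simp add: s_def)
  define a where "a = Re w"
  define b where "b = Im w"
  have w: "w = complex_of_real a + \<i> * complex_of_real b" by (simp add: a_def b_def complex_eq)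
  define \<theta> where "\<theta> = b / s - \<sigma> * s"
  define cst where "cst = exp (- \<i> * complex_of_real (\<sigma> * a) + complex_of_real (b\<^sup>2 / (2 * s\<^sup>2)))"
  let ?F = "\<lambda>x. exp (- \<i> * complex_of_real (\<sigma> * x)) * exp (- ((complex_of_real x - w) ^ 2) / complex_of_real (2 * h))"
  have "fourier_R (\<lambda>t. exp (- ((complex_of_real t - w) ^ 2) / complex_of_real (2 * h))) \<sigma> = (\<integral>x. ?F x \<partial>lborel)"
    by (simp add: fourier_R_def)
  also have "\<dots> = \<bar>s\<bar> *\<^sub>R (\<integral>y. ?F (a + s * y) \<partial>lborel)"
    by (rule lborel_integral_real_affine) (use s in simp)
  also have "(\<integral>y. ?F (a + s * y) \<partial>lborel) = (\<integral>y. cst * (exp (- y\<^sup>2 / 2) *\<^sub>R exp (\<i> * complex_of_real (\<theta> * y))) \<partial>lborel)"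
    unfolding cst_def \<theta>_def hs w by (intro Bochner_Integration.integral_cong refl pt_eq s)
  also have "\<dots> = cst * complex_of_real (sqrt (2 * pi) * exp (- \<theta>\<^sup>2 / 2))"
    by (subst integral_mult_right_zero) (simp only: gauss_char)
  also have "\<bar>s\<bar> *\<^sub>R (cst * complex_of_real (sqrt (2 * pi) * exp (- \<theta>\<^sup>2 / 2))) =
      complex_of_real (sqrt (2 * pi) * s) * (cst * exp (complex_of_real (- \<theta>\<^sup>2 / 2)))"
    using s by (simp only: exp_of_real) (simp add: scaleR_conv_of_real mult_ac)
  also have "cst * exp (complex_of_real (- \<theta>\<^sup>2 / 2)) = exp (- complex_of_real (h * \<sigma>\<^sup>2 / 2) - \<i> * complex_of_real \<sigma> * w)"
  proof -
    have sz: "complex_of_real s \<noteq> 0" using s by simp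
    have "- \<i> * complex_of_real (\<sigma> * a) + complex_of_real (b\<^sup>2 / (2 * s\<^sup>2)) + complex_of_real (- \<theta>\<^sup>2 / 2)
          = - complex_of_real (h * \<sigma>\<^sup>2 / 2) - \<i> * complex_of_real \<sigma> * w"
      unfolding \<theta>_def hs w using sz by (simp add: field_simps power2_eq_square)
    thus ?thesis unfolding cst_def by (simp only: exp_add[symmetric])
  qed
  also have "sqrt (2 * pi) * s = sqrt (2 * pi * h)" by (simp add: s_def real_sqrt_mult)
  finally show ?thesis .
qed


lemma G_eq:
  assumes h: "h > 0"
  shows "G n h s w = complex_of_real (1 / sqrt (2 * pi) * (1 / sqrt h) ^ (n - 1)) *
           J (n - 1) ((complex_of_real s - w) * complex_of_real (1 / sqrt h))"
proof -
  define k where "k = n - 1"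
  define c where "c = 1 / sqrt h"
  have c: "c > 0" using h by (simp add: c_def)
  have hc: "h * c\<^sup>2 = 1" using h by (simp add: c_def power_divide)
  define \<zeta> where "\<zeta> = (complex_of_real s - w) * complex_of_real c"
  let ?f = "\<lambda>t. exp (- ((complex_of_real t - w) ^ 2) / complex_of_real (2 * h))"
  let ?H = "\<lambda>\<sigma>. exp (\<i> * complex_of_real (s * \<sigma>)) * complex_of_real (\<bar>\<sigma>\<bar> ^ k) *
      (complex_of_real (sqrt (2 * pi * h)) * exp (- complex_of_real (h * \<sigma>\<^sup>2 / 2) - \<i> * complex_of_real \<sigma> * w))"
  have "G n h s w = complex_of_real (1 / (2 * pi)) * (\<integral>\<sigma>. ?H \<sigma> \<partial>lborel)"
    unfolding G_def absD_pow_def k_def[symmetric] fourier_gauss[OF h] ..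
  also have "(\<integral>\<sigma>. ?H \<sigma> \<partial>lborel) = \<bar>c\<bar> *\<^sub>R (\<integral>\<tau>. ?H (0 + c * \<tau>) \<partial>lborel)"
    by (rule lborel_integral_real_affine) (use c in simp)
  also have "(\<integral>\<tau>. ?H (0 + c * \<tau>) \<partial>lborel) =
      (\<integral>\<tau>. complex_of_real (sqrt (2 * pi * h) * c ^ k) * (complex_of_real (\<bar>\<tau>\<bar> ^ k) * E \<zeta> \<tau>) \<partial>lborel)"
  proof (intro Bochner_Integration.integral_cong refl)
    fix \<tau>
    have e: "exp (\<i> * complex_of_real (s * (c * \<tau>))) * exp (- complex_of_real (h * (c * \<tau>)\<^sup>2 / 2) - \<i> * complex_of_real (c * \<tau>) * w)
        = E \<zeta> \<tau>"
    proof -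
      have "\<i> * complex_of_real (s * (c * \<tau>)) + (- complex_of_real (h * (c * \<tau>)\<^sup>2 / 2) - \<i> * complex_of_real (c * \<tau>) * w)
          = \<i> * \<zeta> * complex_of_real \<tau> - (complex_of_real \<tau>)\<^sup>2 / 2"
      proof -
        have "h * (c * \<tau>)\<^sup>2 = \<tau>\<^sup>2" using hc by (simp add: power_mult_distrib mult.assoc[symmetric] mult.commute)
        hence "complex_of_real (h * (c * \<tau>)\<^sup>2 / 2) = (complex_of_real \<tau>)\<^sup>2 / 2" by simp
        thus ?thesis unfolding \<zeta>_def by (simp add: algebra_simps)
      qed
      thus ?thesis unfolding E_def by (simp only: exp_add[symmetric])
    qed
    have "\<bar>c * \<tau>\<bar> ^ k = c ^ k * \<bar>\<tau>\<bar> ^ k" using c by (simp add: abs_mult power_mult_distrib)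
    then show "?H (0 + c * \<tau>) = complex_of_real (sqrt (2 * pi * h) * c ^ k) * (complex_of_real (\<bar>\<tau>\<bar> ^ k) * E \<zeta> \<tau>)"
      using e[symmetric] by (simp add: mult_ac)
  qed
  also have "\<dots> = complex_of_real (sqrt (2 * pi * h) * c ^ k) * J k \<zeta>"
    unfolding J_def by (rule integral_mult_right_zero)
  finally have "G n h s w = complex_of_real (1 / (2 * pi)) * (c *\<^sub>R (complex_of_real (sqrt (2 * pi * h) * c ^ k) * J k \<zeta>))"
    using c by simp
  also have "\<dots> = complex_of_real (1 / (2 * pi) * (c * sqrt (2 * pi * h)) * c ^ k) * J k \<zeta>"
    by (simp add: scaleR_conv_of_real mult_ac)
  also have "1 / (2 * pi) * (c * sqrt (2 * pi * h)) = 1 / sqrt (2 * pi)"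
  proof -
    have "c * sqrt (2 * pi * h) = sqrt (2 * pi)" using h by (simp add: c_def real_sqrt_mult)
    moreover have "1 / (2 * pi) * sqrt (2 * pi) = 1 / sqrt (2 * pi)"
      by (metis divide_divide_eq_right divide_self_if less_numeral_extra(3) mult_1 pi_gt_zero
          real_div_sqrt times_divide_eq_left zero_le_mult_iff zero_less_numeral mult_nonneg_nonneg less_imp_le)
    ultimately show ?thesis by simp
  qed
  finally show ?thesis unfolding \<zeta>_def c_def k_def .
qed


theorem lemma2p2:
  fixes n :: nat
  assumes "n \<ge> 1"
  shows "\<exists>B::real. \<forall>h::real. \<forall>s::real. \<forall>w::complex. 0 < h \<longrightarrow> h \<le> 1 \<longrightarrow>
           cmod (G n h s w) \<le> B * h powr (- (real n - 1) / 2)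
             * (1 + h powr (-1/2) * cmod (complex_of_real s - w)) ^ n
             * (1 + exp (((Im w)\<^sup>2 - (s - Re w)\<^sup>2) / (2 * h)))"
proof -
  define k where "k = n - 1"
  have nk: "n = Suc k" using assms by (simp add: k_def)
  obtain C where C: "C \<ge> 0" "\<And>z. norm (J k z) \<le> C * (1 + cmod z) ^ Suc k * (1 + Qz z)"
    using J_bound[of k] by auto
  show ?thesis
  proof (intro exI[of _ "C / sqrt (2 * pi)"] allI impI)
    fix h s :: real and w :: complex
    assume h: "0 < h" "h \<le> 1"
    define c where "c = 1 / sqrt h"
    have c: "c > 0" using h by (simp add: c_def)
    have hp: "h powr (-1/2) = c"
      using h by (simp add: c_def powr_minus_divide powr_half_sqrt)
    have hk: "h powr (- (real n - 1) / 2) = c ^ k"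
    proof -
      have "c ^ k = (h powr (-1/2)) ^ k" by (simp only: hp)
      also have "\<dots> = h powr (real k * (-1/2))" using h by (simp add: powr_power)
      finally show ?thesis by (simp add: nk)
    qed
    define \<zeta> where "\<zeta> = (complex_of_real s - w) * complex_of_real c"
    have nz: "cmod \<zeta> = h powr (-1/2) * cmod (complex_of_real s - w)"
      using c unfolding hp by (simp add: \<zeta>_def norm_mult)
    have Qz: "Qz \<zeta> = exp (((Im w)\<^sup>2 - (s - Re w)\<^sup>2) / (2 * h))"
    proof -
      have hc: "c\<^sup>2 = 1 / h" using h by (simp add: c_def power_divide)
      have "(Im \<zeta>)\<^sup>2 - (Re \<zeta>)\<^sup>2 = c\<^sup>2 * ((Im w)\<^sup>2 - (s - Re w)\<^sup>2)"
        by (simp add: \<zeta>_def power2_eq_square algebra_simps)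
      thus ?thesis unfolding Qz_def hc by (simp add: field_simps)
    qed
    have "cmod (G n h s w) = 1 / sqrt (2 * pi) * c ^ k * norm (J k \<zeta>)"
      unfolding G_eq[OF h(1)] k_def[symmetric] c_def[symmetric] \<zeta>_def[symmetric]
      using c by (simp add: norm_mult norm_divide norm_power)
    also have "\<dots> \<le> 1 / sqrt (2 * pi) * c ^ k * (C * (1 + cmod \<zeta>) ^ Suc k * (1 + Qz \<zeta>))"
      using c by (intro mult_left_mono C(2)) auto
    also have "\<dots> = C / sqrt (2 * pi) * h powr (- (real n - 1) / 2)
             * (1 + h powr (-1/2) * cmod (complex_of_real s - w)) ^ n
             * (1 + exp (((Im w)\<^sup>2 - (s - Re w)\<^sup>2) / (2 * h)))"
      by (simp only: hk nz Qz nk[symmetric]) (simp add: field_simps)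
    finally show "cmod (G n h s w) \<le> C / sqrt (2 * pi) * h powr (- (real n - 1) / 2)
             * (1 + h powr (-1/2) * cmod (complex_of_real s - w)) ^ n
             * (1 + exp (((Im w)\<^sup>2 - (s - Re w)\<^sup>2) / (2 * h)))" .
  qed
qed

end
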